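(* Let $S=S(r_1,r_2,\ldots,r_k)$ be a starlike tree. Then: (1) if $r_i\geq 4$ for all $i$, then $GA(S)>ABC(S)$; (2) if $r_i\geq 2$ for all $i$ and $\frac{1}{k}\sum_{i=1}^{k}r_i\geq 4$, then $GA(S)>ABC(S)$; (3) if $\frac{1}{k}\sum_{i=1}^{k}r_i\geq 8$, then $GA(S)>ABC(S)$.
   Context: A starlike tree is a tree with exactly one vertex of degree greater than two. $S(r_1,\ldots,r_k)$ denotes the starlike tree having a vertex $v$ of degree $k>2$ such that deleting $v$ leaves the disjoint union of paths $P_{r_1}\cup\cdots\cup P_{r_k}$, where $P_r$ is the path on $r$ vertices and $r_1\geq r_2\geq\cdots\geq r_k\geq 1$ (so $S$ has $1+\sum r_i$ vertices). With $d_i$ the degree of vertex $v_i$, $GA(S)=\sum_{v_iv_j\in E(S)}\frac{2\sqrt{d_id_j}}{d_i+d_j}$ and $ABC(S)=\sum_{v_iv_j\in E(S)}\sqrt{\frac{d_i+d_j-2}{d_id_j}}$. *)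

theory Defs
  imports Complex_Main
begin

text \<open>A simple graph is given by its edge set: a set of two-element vertex sets.
  The degree of a vertex is the number of edges containing it.\<close>

definition deg :: "'a set set \<Rightarrow> 'a \<Rightarrow> nat" where
  "deg E v = card {e \<in> E. v \<in> e}"

definition GA :: "'a set set \<Rightarrow> real" where
  "GA E = (\<Sum>e\<in>E. 2 * sqrt (\<Prod>v\<in>e. real (deg E v)) / (\<Sum>v\<in>e. real (deg E v)))"

definition ABC :: "'a set set \<Rightarrow> real" where
  "ABC E = (\<Sum>e\<in>E. sqrt (((\<Sum>v\<in>e. real (deg E v)) - 2) / (\<Prod>v\<in>e. real (deg E v))))"

text \<open>The starlike tree S(r_1,...,r_k): centre (0,0); the i-th pendant path
  (1 \<le> i \<le> k) has vertices (i,1),...,(i,r_i), with (i,1) adjacent to the centre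
  and (i,j) adjacent to (i,j+1).\<close>
definition starlike_edges :: "nat \<Rightarrow> (nat \<Rightarrow> nat) \<Rightarrow> (nat \<times> nat) set set" where
  "starlike_edges k r =
     {{(0,0), (i,1)} | i. 1 \<le> i \<and> i \<le> k \<and> 1 \<le> r i} \<union>
     {{(i,j), (i,j+1)} | i j. 1 \<le> i \<and> i \<le> k \<and> 1 \<le> j \<and> j + 1 \<le> r i}"

end

theory Submission
  imports Defs
begin

definition pv :: "nat \<Rightarrow> nat \<Rightarrow> nat \<times> nat" where
  "pv i j = (if j = 1 then (0,0) else (i, j - 1))"

definition ge :: "nat \<times> nat \<Rightarrow> (nat \<times> nat) set" where
  "ge w = {pv (fst w) (snd w), w}"

definition VV :: "nat \<Rightarrow> (nat \<Rightarrow> nat) \<Rightarrow> (nat \<times> nat) set" where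
  "VV k r = Sigma {1..k} (\<lambda>i. {1..r i})"

lemma E_eq:
  assumes "\<And>i. 1 \<le> i \<Longrightarrow> i \<le> k \<Longrightarrow> r i \<ge> 1"
  shows "starlike_edges k r = ge ` VV k r"
proof
  show "starlike_edges k r \<subseteq> ge ` VV k r"
  proof
    fix e assume "e \<in> starlike_edges k r"
    then consider (a) i where "e = {(0,0),(i,1)}" "1 \<le> i" "i \<le> k" "1 \<le> r i"
      | (b) i j where "e = {(i,j),(i,j+1)}" "1 \<le> i" "i \<le> k" "1 \<le> j" "j + 1 \<le> r i"
      unfolding starlike_edges_def by blast
    then show "e \<in> ge ` VV k r"
    proof cases
      case a
      then have "e = ge (i,1)" by (simp add: ge_def pv_def)
      moreover have "(i,1) \<in> VV k r" using a by (simp add: VV_def)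
      ultimately show ?thesis by blast
    next
      case b
      then have "e = ge (i,j+1)" by (auto simp: ge_def pv_def)
      moreover have "(i,j+1) \<in> VV k r" using b by (simp add: VV_def)
      ultimately show ?thesis by blast
    qed
  qed
next
  show "ge ` VV k r \<subseteq> starlike_edges k r"
  proof
    fix e assume "e \<in> ge ` VV k r"
    then obtain i j where ij: "e = ge (i,j)" "1 \<le> i" "i \<le> k" "1 \<le> j" "j \<le> r i"
      by (auto simp: VV_def)
    show "e \<in> starlike_edges k r"
    proof (cases "j = 1")
      case True
      then have "e = {(0,0),(i,1)}" using ij by (simp add: ge_def pv_def)
      then show ?thesis using ij True unfolding starlike_edges_def by blast
    next
      case False
      then have "e = {(i,j-1),(i,(j-1)+1)}" using ij by (auto simp: ge_def pv_def)
      moreover have "1 \<le> j - 1" "j - 1 + 1 \<le> r i" using ij False by auto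
      ultimately show ?thesis using ij unfolding starlike_edges_def by blast
    qed
  qed
qed

lemma pv_ne: "1 \<le> i \<Longrightarrow> 1 \<le> j \<Longrightarrow> pv i j \<noteq> (i,j)"
  by (auto simp: pv_def)

lemma inj_ge: "inj_on ge (VV k r)"
proof (rule inj_onI)
  fix w w' assume w: "w \<in> VV k r" "w' \<in> VV k r" "ge w = ge w'"
  obtain i j where wi: "w = (i,j)" "1 \<le> i" "1 \<le> j" using w by (auto simp: VV_def)
  obtain i' j' where wi': "w' = (i',j')" "1 \<le> i'" "1 \<le> j'" using w by (auto simp: VV_def)
  show "w = w'"
  proof (rule ccontr)
    assume ne: "w \<noteq> w'"
    have "w \<in> ge w" by (simp add: ge_def)
    then have "w \<in> ge w'" using w(3) by simp
    then have "(i,j) = pv i' j'" using ne wi wi' by (auto simp: ge_def)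
    then have A: "i = i'" "j' = j + 1" using wi wi' by (auto simp: pv_def split: if_splits)
    have "w' \<in> ge w'" by (simp add: ge_def)
    then have "w' \<in> ge w" using w(3) by simp
    then have "(i',j') = pv i j" using ne wi wi' by (auto simp: ge_def)
    then show False using A wi wi' by (auto simp: pv_def split: if_splits)
  qed
qed

lemma deg_card:
  assumes "\<And>i. 1 \<le> i \<Longrightarrow> i \<le> k \<Longrightarrow> r i \<ge> 1"
  shows "deg (starlike_edges k r) v = card {w \<in> VV k r. v \<in> ge w}"
proof -
  have "{e \<in> starlike_edges k r. v \<in> e} = ge ` {w \<in> VV k r. v \<in> ge w}"
    using E_eq[OF assms] by auto
  moreover have "inj_on ge {w \<in> VV k r. v \<in> ge w}"
    using inj_ge by (rule inj_on_subset) auto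
  ultimately show ?thesis by (simp add: deg_def card_image)
qed

lemma deg_center:
  assumes "\<And>i. 1 \<le> i \<Longrightarrow> i \<le> k \<Longrightarrow> r i \<ge> 1"
  shows "deg (starlike_edges k r) (0,0) = k"
proof -
  have "{w \<in> VV k r. (0,0) \<in> ge w} = (\<lambda>i. (i,1)) ` {1..k}"
  proof
    show "{w \<in> VV k r. (0,0) \<in> ge w} \<subseteq> (\<lambda>i. (i,1)) ` {1..k}"
      by (auto simp: VV_def ge_def pv_def split: if_splits)
    show "(\<lambda>i. (i,1)) ` {1..k} \<subseteq> {w \<in> VV k r. (0,0) \<in> ge w}"
      using assms by (auto simp: VV_def ge_def pv_def)
  qed
  moreover have "inj_on (\<lambda>i::nat. (i,1::nat)) {1..k}" by (auto intro: inj_onI)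
  ultimately show ?thesis by (simp add: deg_card[OF assms] card_image)
qed

lemma deg_inner:
  assumes "\<And>i. 1 \<le> i \<Longrightarrow> i \<le> k \<Longrightarrow> r i \<ge> 1"
    and "(i,j) \<in> VV k r"
  shows "deg (starlike_edges k r) (i,j) = (if j < r i then 2 else 1)"
proof -
  have ij: "1 \<le> i" "i \<le> k" "1 \<le> j" "j \<le> r i" using assms(2) by (auto simp: VV_def)
  have "{w \<in> VV k r. (i,j) \<in> ge w} = insert (i,j) (if j < r i then {(i,j+1)} else {})"
  proof
    show "{w \<in> VV k r. (i,j) \<in> ge w} \<subseteq> insert (i,j) (if j < r i then {(i,j+1)} else {})"
    proof
      fix w assume "w \<in> {w \<in> VV k r. (i,j) \<in> ge w}"
      then obtain a b where w: "w = (a,b)" "(a,b) \<in> VV k r" "(i,j) \<in> ge (a,b)" by (cases w) auto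
      then have "(i,j) = (a,b) \<or> (i,j) = pv a b" by (auto simp: ge_def)
      then show "w \<in> insert (i,j) (if j < r i then {(i,j+1)} else {})"
        using w ij by (auto simp: pv_def VV_def split: if_splits)
    qed
    show "insert (i,j) (if j < r i then {(i,j+1)} else {}) \<subseteq> {w \<in> VV k r. (i,j) \<in> ge w}"
      using ij assms(2) by (auto simp: VV_def ge_def pv_def)
  qed
  then show ?thesis by (simp add: deg_card[OF assms(1)])
qed

definition T :: "real \<Rightarrow> real \<Rightarrow> real" where
  "T a b = 2 * sqrt (a * b) / (a + b) - sqrt ((a + b - 2) / (a * b))"

lemma diff_sum:
  assumes "\<And>i. 1 \<le> i \<Longrightarrow> i \<le> k \<Longrightarrow> r i \<ge> 1"
  shows "GA (starlike_edges k r) - ABC (starlike_edges k r) =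
    (\<Sum>i\<in>{1..k}. \<Sum>j\<in>{1..r i}. T (if j = 1 then real k else 2) (if j < r i then 2 else 1))"
proof -
  let ?E = "starlike_edges k r"
  let ?F = "\<lambda>e. 2 * sqrt (\<Prod>v\<in>e. real (deg ?E v)) / (\<Sum>v\<in>e. real (deg ?E v))
      - sqrt (((\<Sum>v\<in>e. real (deg ?E v)) - 2) / (\<Prod>v\<in>e. real (deg ?E v)))"
  have "GA ?E - ABC ?E = (\<Sum>e\<in>?E. ?F e)"
    by (simp add: GA_def ABC_def sum_subtractf)
  also have "\<dots> = (\<Sum>w\<in>VV k r. ?F (ge w))"
  proof -
    have "sum ?F ?E = sum ?F (ge ` VV k r)"
      using E_eq[OF assms] by (rule arg_cong)
    also have "\<dots> = (\<Sum>w\<in>VV k r. ?F (ge w))"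
      by (rule sum.reindex[OF inj_ge, unfolded comp_def])
    finally show ?thesis .
  qed
  also have "\<dots> = (\<Sum>w\<in>VV k r. T (if snd w = 1 then real k else 2) (if snd w < r (fst w) then 2 else 1))"
  proof (rule sum.cong[OF refl])
    fix w assume w: "w \<in> VV k r"
    then obtain i j where ij: "w = (i,j)" "1 \<le> i" "i \<le> k" "1 \<le> j" "j \<le> r i"
      by (auto simp: VV_def)
    have ne: "pv i j \<noteq> (i,j)" using pv_ne ij by auto
    have dp: "real (deg ?E (pv i j)) = (if j = 1 then real k else 2)"
    proof (cases "j = 1")
      case True then show ?thesis by (simp add: pv_def deg_center[OF assms])
    next
      case False
      then have "(i, j-1) \<in> VV k r" "j - 1 < r i" using ij by (auto simp: VV_def)
      then show ?thesis using False by (simp add: pv_def deg_inner[OF assms])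
    qed
    have dv: "real (deg ?E (i,j)) = (if j < r i then 2 else 1)"
      using deg_inner[OF assms] w ij by simp
    show "?F (ge w) = T (if snd w = 1 then real k else 2) (if snd w < r (fst w) then 2 else 1)"
      using ne unfolding ij ge_def T_def by (simp add: dp dv)
  qed
  also have "\<dots> = (\<Sum>i\<in>{1..k}. \<Sum>j\<in>{1..r i}. T (if j = 1 then real k else 2) (if j < r i then 2 else 1))"
    unfolding VV_def by (subst sum.Sigma) (auto simp: case_prod_unfold)
  finally show ?thesis .
qed

definition LB :: "nat \<Rightarrow> real" where
  "LB n = (if n = 1 then -1 else real n * (1 - sqrt (1/2)) - 2 + 4 * sqrt (1/2) / 3)"

lemma sqrt2: "sqrt 2 = 2 * sqrt (1/2)"
proof -
  have "sqrt 2 = sqrt (4 * (1/2))" by simp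
  also have "\<dots> = 2 * sqrt (1/2)" by (simp only: real_sqrt_mult) simp
  finally show ?thesis .
qed

lemma branch:
  assumes "n \<ge> 1" "real k \<ge> 3"
  shows "(\<Sum>j\<in>{1..n}. T (if j = 1 then real k else 2) (if j < n then 2 else 1)) \<ge> LB n"
proof (cases "n = 1")
  case True
  have "sqrt ((real k - 1) / real k) \<le> 1" using assms by simp
  moreover have "2 * sqrt (real k) / (real k + 1) \<ge> 0" using assms by simp
  moreover have "T (real k) 1 = 2 * sqrt (real k) / (real k + 1) - sqrt ((real k - 1) / real k)"
    unfolding T_def by simp
  ultimately have "T (real k) 1 \<ge> -1" by linarith
  then show ?thesis using True by (simp add: LB_def)
next
  case False
  let ?a = "sqrt (1/2) :: real"
  have n2: "n \<ge> 2" using assms False by auto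
  have S: "{1..n} = insert 1 (insert n {2..<n})" using n2 by auto
  have T1: "T (real k) 2 \<ge> - ?a"
  proof -
    have "(real k + 2 - 2) / (real k * 2) = 1/2" using assms by simp
    moreover have "2 * sqrt (real k * 2) / (real k + 2) \<ge> 0" using assms by simp
    ultimately show ?thesis unfolding T_def by simp
  qed
  have T2: "T 2 1 = 4 * ?a / 3 - ?a"
    unfolding T_def using sqrt2 by simp
  have T3: "T 2 2 = 1 - ?a"
  proof -
    have "sqrt (4::real) = 2" by (simp add: real_sqrt_eq_iff)
    then show ?thesis unfolding T_def by simp
  qed
  have "(\<Sum>j\<in>{1..n}. T (if j = 1 then real k else 2) (if j < n then 2 else 1))
      = T (real k) 2 + (T 2 1 + (\<Sum>j\<in>{2..<n}. T 2 2))"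
    unfolding S using n2
    by (subst sum.insert; (auto)?; subst sum.insert; (auto)?; intro sum.cong; auto)
  also have "\<dots> = T (real k) 2 + T 2 1 + (real n - 2) * (1 - ?a)"
    using n2 by (simp add: T3 of_nat_diff)
  finally show ?thesis using T1 T2 False by (simp add: LB_def algebra_simps)
qed

theorem theorem3p9:
  fixes k :: nat and r :: "nat \<Rightarrow> nat"
  assumes "k > 2"
    and "\<And>i. 1 \<le> i \<Longrightarrow> i \<le> k \<Longrightarrow> r i \<ge> 1"
    and "\<And>i j. 1 \<le> i \<Longrightarrow> i \<le> j \<Longrightarrow> j \<le> k \<Longrightarrow> r j \<le> r i"
  shows "((\<forall>i\<in>{1..k}. r i \<ge> 4) \<longrightarrow>
            GA (starlike_edges k r) > ABC (starlike_edges k r))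
       \<and> ((\<forall>i\<in>{1..k}. r i \<ge> 2) \<and> (\<Sum>i=1..k. real (r i)) / real k \<ge> 4 \<longrightarrow>
            GA (starlike_edges k r) > ABC (starlike_edges k r))
       \<and> ((\<Sum>i=1..k. real (r i)) / real k \<ge> 8 \<longrightarrow>
            GA (starlike_edges k r) > ABC (starlike_edges k r))"
proof -
  let ?a = "sqrt (1/2) :: real"
  have a_lt: "?a < 3/4"
  proof -
    have "sqrt (1/2::real) < sqrt (9/16)" by simp
    moreover have "sqrt (9/16::real) = 3/4" by (rule real_sqrt_unique) (auto simp: power2_eq_square)
    ultimately show ?thesis by simp
  qed
  have a_pos: "?a > 0" by simp
  have kpos: "real k > 0" and k3: "real k \<ge> 3" using assms(1) by auto
  have D: "GA (starlike_edges k r) - ABC (starlike_edges k r) \<ge> (\<Sum>i\<in>{1..k}. LB (r i))"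
  proof -
    have "(\<Sum>i\<in>{1..k}. LB (r i)) \<le> (\<Sum>i\<in>{1..k}. \<Sum>j\<in>{1..r i}. T (if j = 1 then real k else 2) (if j < r i then 2 else 1))"
      by (rule sum_mono) (rule branch[OF assms(2) k3], auto)
    then show ?thesis using diff_sum[OF assms(2)] by simp
  qed
  have P2: "GA (starlike_edges k r) > ABC (starlike_edges k r)"
    if h: "\<forall>i\<in>{1..k}. r i \<ge> 2" "(\<Sum>i=1..k. real (r i)) / real k \<ge> 4"
  proof -
    have s4: "(\<Sum>i=1..k. real (r i)) \<ge> 4 * real k" using h(2) kpos by (simp add: field_simps)
    have "(\<Sum>i\<in>{1..k}. LB (r i)) = (\<Sum>i\<in>{1..k}. real (r i) * (1 - ?a) + (- 2 + 4 * ?a / 3))"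
    proof (rule sum.cong[OF refl])
      fix x assume "x \<in> {1..k}"
      then have "r x \<noteq> 1" using h(1) by fastforce
      then show "LB (r x) = real (r x) * (1 - ?a) + (- 2 + 4 * ?a / 3)" by (simp add: LB_def)
    qed
    also have "\<dots> = (1 - ?a) * (\<Sum>i=1..k. real (r i)) + real k * (- 2 + 4 * ?a / 3)"
      by (simp only: sum.distrib sum_distrib_right[symmetric] sum_constant card_atLeastAtMost) (simp add: algebra_simps)
    also have "\<dots> \<ge> (1 - ?a) * (4 * real k) + real k * (- 2 + 4 * ?a / 3)"
      using s4 a_lt by (intro add_right_mono mult_left_mono) auto
    finally have "(\<Sum>i\<in>{1..k}. LB (r i)) \<ge> real k * (2 - 8 * ?a / 3)"
      by (simp add: algebra_simps)
    moreover have "real k * (2 - 8 * ?a / 3) > 0" using kpos a_lt by simp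
    ultimately show ?thesis using D by linarith
  qed
  have P3: "GA (starlike_edges k r) > ABC (starlike_edges k r)"
    if h: "(\<Sum>i=1..k. real (r i)) / real k \<ge> 8"
  proof -
    have s8: "(\<Sum>i=1..k. real (r i)) \<ge> 8 * real k" using h kpos by (simp add: field_simps)
    have L1: "(\<Sum>i\<in>{1..k}. LB (r i)) \<ge> (\<Sum>i\<in>{1..k}. real (r i) * (1 - ?a) + (?a - 2))"
      by (rule sum_mono) (use a_pos in \<open>auto simp: LB_def\<close>)
    have L2: "(\<Sum>i\<in>{1..k}. real (r i) * (1 - ?a) + (?a - 2)) = (1 - ?a) * (\<Sum>i=1..k. real (r i)) + real k * (?a - 2)"
      by (simp only: sum.distrib sum_distrib_right[symmetric] sum_constant card_atLeastAtMost) (simp add: algebra_simps)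
    have L3: "(1 - ?a) * (\<Sum>i=1..k. real (r i)) \<ge> (1 - ?a) * (8 * real k)"
      using s8 a_lt by (intro mult_left_mono) auto
    have "(\<Sum>i\<in>{1..k}. LB (r i)) \<ge> real k * (6 - 7 * ?a)"
      using L1 L2 L3 by (simp add: algebra_simps)
    moreover have "real k * (6 - 7 * ?a) > 0" using kpos a_lt by simp
    ultimately show ?thesis using D by linarith
  qed
  have P1: "GA (starlike_edges k r) > ABC (starlike_edges k r)"
    if h: "\<forall>i\<in>{1..k}. r i \<ge> 4"
  proof (rule P2)
    show "\<forall>i\<in>{1..k}. r i \<ge> 2" using h by auto
    have "(\<Sum>i=1..k. real (r i)) \<ge> (\<Sum>i=1..k. 4)" by (rule sum_mono) (use h in auto)
    then show "(\<Sum>i=1..k. real (r i)) / real k \<ge> 4" using kpos by (simp add: field_simps)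
  qed
  show ?thesis using P1 P2 P3 by blast
qed

end
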